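(* Let $\phi:Z\to[-\infty,+\infty]$ be proper and closed, and suppose Assumptions (A1) and (A2) hold for some $\lambda\in\mathbb R$. Let $\tau\in(0,1/\lambda^-)$, write $J_\tau z=(J^X_\tau z,J^Y_\tau z)$. Then for every $z=(x,y)\in Z$ and every $z'=(x',y')\in D\phi$: $\frac{\mathsf d_X^2(J^X_\tau z,x')-\mathsf d_X^2(x,x')}{2\tau}+\frac\lambda2\mathsf d_X^2(J^X_\tau z,x')+\phi(J^X_\tau z,J^Y_\tau z)\le\phi(x',J^Y_\tau z)-\frac1{2\tau}\mathsf d_X^2(J^X_\tau z,x)$, $\frac{\mathsf d_Y^2(J^Y_\tau z,y')-\mathsf d_Y^2(y,y')}{2\tau}+\frac\lambda2\mathsf d_Y^2(J^Y_\tau z,y')+\phi(J^X_\tau z,y')\le\phi(J^X_\tau z,J^Y_\tau z)-\frac1{2\tau}\mathsf d_Y^2(J^Y_\tau z,y)$.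
   Context: $(X,\mathsf d_X)$, $(Y,\mathsf d_Y)$ complete metric spaces; $Z=X\times Y$. $D_X\phi=\{x:\phi(x,y)<+\infty\ \forall y\}$, $D_Y\phi=\{y:\phi(x,y)>-\infty\ \forall x\}$, $D\phi=D_X\phi\times D_Y\phi$; proper: $D\phi\ne\emptyset$; closed: for $x\in D_X\phi$, $y\mapsto\phi(x,y)$ upper semicontinuous, for $y\in D_Y\phi$, $x\mapsto\phi(x,y)$ lower semicontinuous. (A1): $\phi=+\infty$ on $(X\setminus D_X\phi)\times D_Y\phi$, $\phi=-\infty$ on $D_X\phi\times(Y\setminus D_Y\phi)$. $\lambda^-=\max\{-\lambda,0\}$, $1/\lambda^-:=+\infty$ if $\lambda^-=0$. $\Phi_\tau(x,y;x',y')=\phi(x',y')+\frac1{2\tau}(\mathsf d_X^2(x',x)-\mathsf d_Y^2(y',y))$. $f$ on $Z$ is $\mu$-convex-concave along curves $\gamma,\sigma$ if for all $t\in[0,1]$: $f(\gamma_t,y)\le(1-t)f(\gamma_0,y)+tf(\gamma_1,y)-\frac\mu2t(1-t)\mathsf d_X^2(\gamma_0,\gamma_1)$ for all $y$ and $f(x,\sigma_t)\ge(1-t)f(x,\sigma_0)+tf(x,\sigma_1)+\frac\mu2t(1-t)\mathsf d_Y^2(\sigma_0,\sigma_1)$ for all $x$. (A2) for $\lambda$: for every $(x,y)\in Z$, $(x_0,y_0),(x_1,y_1)\in D\phi$ there are continuous curves $\gamma$ from $x_0$ to $x_1$, $\sigma$ from $y_0$ to $y_1$ such that for all $\tau\in(0,1/\lambda^-)$,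 $(x',y')\mapsto\Phi_\tau(x,y;x',y')$ is $(\tau^{-1}+\lambda)$-convex-concave along them. Resolvent: $J_\tau z$ is the (unique, existing under these assumptions) saddle point of $z'\mapsto\Phi_\tau(z;z')$, i.e. the point $(\bar x,\bar y)$ with $\Phi_\tau(z;\bar x,y')\le\Phi_\tau(z;\bar x,\bar y)\le\Phi_\tau(z;x',\bar y)$ for all $(x',y')\in Z$. *)

theory Defs
  imports "HOL-Analysis.Analysis" "HOL-Library.Extended_Real"
begin

definition DX :: "('a \<Rightarrow> 'b \<Rightarrow> ereal) \<Rightarrow> 'a set" where
  "DX phi = {x. \<forall>y. phi x y < \<infinity>}"

definition DY :: "('a \<Rightarrow> 'b \<Rightarrow> ereal) \<Rightarrow> 'b set" where
  "DY phi = {y. \<forall>x. phi x y > -\<infinity>}"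

definition proper_sp :: "('a \<Rightarrow> 'b \<Rightarrow> ereal) \<Rightarrow> bool" where
  "proper_sp phi \<longleftrightarrow> DX phi \<times> DY phi \<noteq> {}"

definition lsc_fun :: "('c::topological_space \<Rightarrow> ereal) \<Rightarrow> bool" where
  "lsc_fun f \<longleftrightarrow> (\<forall>x. f x \<le> Liminf (at x) f)"

definition usc_fun :: "('c::topological_space \<Rightarrow> ereal) \<Rightarrow> bool" where
  "usc_fun f \<longleftrightarrow> (\<forall>x. Limsup (at x) f \<le> f x)"

definition closed_sp :: "('a::topological_space \<Rightarrow> 'b::topological_space \<Rightarrow> ereal) \<Rightarrow> bool" where
  "closed_sp phi \<longleftrightarrow>
     (\<forall>x\<in>DX phi. usc_fun (\<lambda>y. phi x y)) \<and> (\<forall>y\<in>DY phi. lsc_fun (\<lambda>x. phi x y))"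

definition A1 :: "('a \<Rightarrow> 'b \<Rightarrow> ereal) \<Rightarrow> bool" where
  "A1 phi \<longleftrightarrow>
     (\<forall>x y. x \<notin> DX phi \<and> y \<in> DY phi \<longrightarrow> phi x y = \<infinity>) \<and>
     (\<forall>x y. x \<in> DX phi \<and> y \<notin> DY phi \<longrightarrow> phi x y = -\<infinity>)"

definition lam_minus :: "real \<Rightarrow> real" where
  "lam_minus lam = max (- lam) 0"

text \<open>tau in (0, 1/lambda^-), with 1/0 = +infinity.\<close>
definition tau_adm :: "real \<Rightarrow> real \<Rightarrow> bool" where
  "tau_adm lam tau \<longleftrightarrow> 0 < tau \<and> (lam_minus lam = 0 \<or> tau < 1 / lam_minus lam)"

definition Phi_tau :: "('a::metric_space \<Rightarrow> 'b::metric_space \<Rightarrow> ereal) \<Rightarrow> real \<Rightarrow> 'a \<Rightarrow> 'b \<Rightarrow> 'a \<Rightarrow> 'b \<Rightarrow> ereal" where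
  "Phi_tau phi tau x y x' y' =
     phi x' y' + ereal ((dist x' x ^ 2 - dist y' y ^ 2) / (2 * tau))"

definition convex_concave_along ::
  "real \<Rightarrow> ('a::metric_space \<Rightarrow> 'b::metric_space \<Rightarrow> ereal) \<Rightarrow> (real \<Rightarrow> 'a) \<Rightarrow> (real \<Rightarrow> 'b) \<Rightarrow> bool" where
  "convex_concave_along mu f gamma sg \<longleftrightarrow>
     (\<forall>t\<in>{0..1}.
        (\<forall>y. f (gamma t) y \<le> ereal (1 - t) * f (gamma 0) y + ereal t * f (gamma 1) y
                 - ereal (mu / 2 * t * (1 - t) * dist (gamma 0) (gamma 1) ^ 2)) \<and>
        (\<forall>x. f x (sg t) \<ge> ereal (1 - t) * f x (sg 0) + ereal t * f x (sg 1)
                 + ereal (mu / 2 * t * (1 - t) * dist (sg 0) (sg 1) ^ 2)))"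

definition A2 :: "('a::metric_space \<Rightarrow> 'b::metric_space \<Rightarrow> ereal) \<Rightarrow> real \<Rightarrow> bool" where
  "A2 phi lam \<longleftrightarrow>
     (\<forall>x y. \<forall>x0\<in>DX phi. \<forall>y0\<in>DY phi. \<forall>x1\<in>DX phi. \<forall>y1\<in>DY phi.
        \<exists>gamma sg.
          continuous_on {0..1} gamma \<and> gamma 0 = x0 \<and> gamma 1 = x1 \<and>
          continuous_on {0..1} sg \<and> sg 0 = y0 \<and> sg 1 = y1 \<and>
          (\<forall>tau. tau_adm lam tau \<longrightarrow>
             convex_concave_along (1 / tau + lam) (Phi_tau phi tau x y) gamma sg))"

text \<open>(xb, yb) is a saddle point of z' \<mapsto> Phi_tau(z; z'), i.e. (xb, yb) = J_tau z.\<close>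
definition is_resolvent ::
  "('a::metric_space \<Rightarrow> 'b::metric_space \<Rightarrow> ereal) \<Rightarrow> real \<Rightarrow> 'a \<Rightarrow> 'b \<Rightarrow> 'a \<Rightarrow> 'b \<Rightarrow> bool" where
  "is_resolvent phi tau x y xb yb \<longleftrightarrow>
     (\<forall>x' y'. Phi_tau phi tau x y xb y' \<le> Phi_tau phi tau x y xb yb \<and>
              Phi_tau phi tau x y xb yb \<le> Phi_tau phi tau x y x' yb)"

end

theory Submission
  imports Defs
begin

lemma lim_aux:
  fixes a b :: real
  assumes "\<And>t. 0 < t \<Longrightarrow> t < 1 \<Longrightarrow> b * (1 - t) \<le> a"
  shows "b \<le> a"
proof (rule tendsto_le[of "at_right (0::real)" "\<lambda>t. a" a "\<lambda>t. b * (1 - t)" b])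
  show "((\<lambda>t. b * (1 - t)) \<longlongrightarrow> b) (at_right 0)"
    by (rule tendsto_eq_intros refl | simp)+
  show "eventually (\<lambda>t. b * (1 - t) \<le> a) (at_right 0)"
    unfolding eventually_at_right[OF zero_less_one]
    using assms by (intro exI[of _ 1]) auto
qed auto

lemma fin_ex: "(z::ereal) \<noteq> \<infinity> \<Longrightarrow> z \<noteq> -\<infinity> \<Longrightarrow> \<exists>r. z = ereal r"
  by (cases z) auto

theorem mainTheorem10:
  fixes phi :: "'a::complete_space \<Rightarrow> 'b::complete_space \<Rightarrow> ereal"
    and lam tau :: real and x xb x' :: 'a and y yb y' :: 'b
  assumes "proper_sp phi" and "closed_sp phi" and "A1 phi" and "A2 phi lam"
    and "tau_adm lam tau"
    and "is_resolvent phi tau x y xb yb"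
    and "x' \<in> DX phi" and "y' \<in> DY phi"
  shows "(ereal ((dist xb x' ^ 2 - dist x x' ^ 2) / (2 * tau) + lam / 2 * dist xb x' ^ 2) + phi xb yb
           \<le> phi x' yb - ereal (dist xb x ^ 2 / (2 * tau))) \<and>
         (ereal ((dist yb y' ^ 2 - dist y y' ^ 2) / (2 * tau) + lam / 2 * dist yb y' ^ 2) + phi xb y'
           \<le> phi xb yb - ereal (dist yb y ^ 2 / (2 * tau)))"
proof -
  have R: "phi xb v + ereal ((dist xb x ^ 2 - dist v y ^ 2) / (2 * tau)) \<le> phi xb yb + ereal ((dist xb x ^ 2 - dist yb y ^ 2) / (2 * tau))
    \<and> phi xb yb + ereal ((dist xb x ^ 2 - dist yb y ^ 2) / (2 * tau)) \<le> phi u yb + ereal ((dist u x ^ 2 - dist yb y ^ 2) / (2 * tau))" for u v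
    using assms(6) unfolding is_resolvent_def Phi_tau_def by blast
  obtain x0 y0 where x0: "x0 \<in> DX phi" and y0: "y0 \<in> DY phi"
    using assms(1) unfolding proper_sp_def by auto
  note A1 = assms(3)[unfolded A1_def]
  have yb: "yb \<in> DY phi"
  proof (rule ccontr)
    assume "yb \<notin> DY phi"
    hence "phi x0 yb = -\<infinity>" using A1 x0 by auto
    hence "phi xb yb = -\<infinity>" using R[where u=x0 and v=y0] by auto
    hence "phi xb y0 = -\<infinity>" using R[where u=x0 and v=y0] by auto
    moreover have "phi xb y0 \<noteq> -\<infinity>"
    proof (cases "xb \<in> DX phi")
      case True thus ?thesis using y0 unfolding DY_def by auto
    next
      case False thus ?thesis using A1 y0 by auto
    qed
    ultimately show False by simp
  qed
  have xb: "xb \<in> DX phi"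
  proof (rule ccontr)
    assume "xb \<notin> DX phi"
    hence "phi xb y0 = \<infinity>" using A1 y0 by auto
    hence "phi xb yb = \<infinity>" using R[where u=x0 and v=y0] by auto
    hence "phi x0 yb = \<infinity>" using R[where u=x0 and v=y0] by auto
    moreover have "phi x0 yb \<noteq> \<infinity>" using x0 unfolding DX_def by auto
    ultimately show False by simp
  qed
  have fin: "\<exists>r. phi u v = ereal r" if "u \<in> DX phi" "v \<in> DY phi" for u v
    using that unfolding DX_def DY_def by (intro fin_ex) auto
  obtain p00 where p00: "phi xb yb = ereal p00" using fin[OF xb yb] by auto
  obtain p10 where p10: "phi x' yb = ereal p10" using fin[OF assms(7) yb] by auto
  obtain p01 where p01: "phi xb y' = ereal p01" using fin[OF xb assms(8)] by auto
  obtain gamma sg where g0: "gamma 0 = xb" and g1: "gamma 1 = x'" and s0: "sg 0 = yb" and s1: "sg 1 = y'"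
    and cc: "convex_concave_along (1 / tau + lam) (Phi_tau phi tau x y) gamma sg"
    using assms(4) xb yb assms(7,8) assms(5) unfolding A2_def by blast
  define mu where "mu = 1 / tau + lam"
  have tau: "tau > 0" using assms(5) unfolding tau_adm_def by auto
  define P0 where "P0 = p00 + (dist xb x ^ 2 - dist yb y ^ 2) / (2 * tau)"
  define P1 where "P1 = p10 + (dist x' x ^ 2 - dist yb y ^ 2) / (2 * tau)"
  define Q1 where "Q1 = p01 + (dist xb x ^ 2 - dist y' y ^ 2) / (2 * tau)"
  have eP0: "Phi_tau phi tau x y xb yb = ereal P0" unfolding Phi_tau_def P0_def p00 by simp
  have eP1: "Phi_tau phi tau x y x' yb = ereal P1" unfolding Phi_tau_def P1_def p10 by simp
  have eQ1: "Phi_tau phi tau x y xb y' = ereal Q1" unfolding Phi_tau_def Q1_def p01 by simp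
  have sad1: "Phi_tau phi tau x y xb yb \<le> Phi_tau phi tau x y u yb" for u
    using assms(6) unfolding is_resolvent_def by auto
  have sad2: "Phi_tau phi tau x y xb v \<le> Phi_tau phi tau x y xb yb" for v
    using assms(6) unfolding is_resolvent_def by auto
  have X: "mu / 2 * dist xb x' ^ 2 \<le> P1 - P0"
  proof (rule lim_aux)
    fix t :: real assume t: "0 < t" "t < 1"
    have "Phi_tau phi tau x y (gamma t) yb \<le> ereal (1 - t) * ereal P0 + ereal t * ereal P1
           - ereal (mu / 2 * t * (1 - t) * dist xb x' ^ 2)"
      using cc t unfolding convex_concave_along_def mu_def g0 g1 eP0[symmetric] eP1[symmetric]
      by auto
    hence "Phi_tau phi tau x y (gamma t) yb \<le> ereal ((1 - t) * P0 + t * P1 - mu / 2 * t * (1 - t) * dist xb x' ^ 2)"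
      by simp
    with sad1[of "gamma t"] have "ereal P0 \<le> ereal ((1 - t) * P0 + t * P1 - mu / 2 * t * (1 - t) * dist xb x' ^ 2)"
      unfolding eP0 by (rule order.trans)
    hence "t * (mu / 2 * (1 - t) * dist xb x' ^ 2) \<le> t * (P1 - P0)"
      by (simp add: algebra_simps)
    hence "mu / 2 * (1 - t) * dist xb x' ^ 2 \<le> P1 - P0" using t(1) by (rule mult_left_le_imp_le)
    thus "mu / 2 * dist xb x' ^ 2 * (1 - t) \<le> P1 - P0"
      by (simp add: algebra_simps)
  qed
  have Y: "mu / 2 * dist yb y' ^ 2 \<le> P0 - Q1"
  proof (rule lim_aux)
    fix t :: real assume t: "0 < t" "t < 1"
    have "Phi_tau phi tau x y xb (sg t) \<ge> ereal (1 - t) * ereal P0 + ereal t * ereal Q1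
           + ereal (mu / 2 * t * (1 - t) * dist yb y' ^ 2)"
      using cc t unfolding convex_concave_along_def mu_def s0 s1 eP0[symmetric] eQ1[symmetric]
      by auto
    hence "Phi_tau phi tau x y xb (sg t) \<ge> ereal ((1 - t) * P0 + t * Q1 + mu / 2 * t * (1 - t) * dist yb y' ^ 2)"
      by simp
    with sad2[of "sg t"] have "ereal P0 \<ge> ereal ((1 - t) * P0 + t * Q1 + mu / 2 * t * (1 - t) * dist yb y' ^ 2)"
      unfolding eP0 by (metis order.trans)
    hence "t * (mu / 2 * (1 - t) * dist yb y' ^ 2) \<le> t * (P0 - Q1)"
      by (simp add: algebra_simps)
    hence "mu / 2 * (1 - t) * dist yb y' ^ 2 \<le> P0 - Q1" using t(1) by (rule mult_left_le_imp_le)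
    thus "mu / 2 * dist yb y' ^ 2 * (1 - t) \<le> P0 - Q1"
      by (simp add: algebra_simps)
  qed
  have e1: "mu / 2 * dist xb x' ^ 2 = dist xb x' ^ 2 / (2 * tau) + lam / 2 * dist xb x' ^ 2"
    "mu / 2 * dist yb y' ^ 2 = dist yb y' ^ 2 / (2 * tau) + lam / 2 * dist yb y' ^ 2"
    using tau by (simp_all add: mu_def field_simps)
  have e2: "P1 - P0 = p10 - p00 + dist x' x ^ 2 / (2 * tau) - dist xb x ^ 2 / (2 * tau)"
    "P0 - Q1 = p00 - p01 + dist y' y ^ 2 / (2 * tau) - dist yb y ^ 2 / (2 * tau)"
    by (simp_all add: P0_def P1_def Q1_def diff_divide_distrib)
  have r1: "(dist xb x' ^ 2 - dist x x' ^ 2) / (2 * tau) + lam / 2 * dist xb x' ^ 2 + p00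
           \<le> p10 - dist xb x ^ 2 / (2 * tau)"
    using X e1 e2 by (simp add: diff_divide_distrib dist_commute)
  have r2: "(dist yb y' ^ 2 - dist y y' ^ 2) / (2 * tau) + lam / 2 * dist yb y' ^ 2 + p01
           \<le> p00 - dist yb y ^ 2 / (2 * tau)"
    using Y e1 e2 by (simp add: diff_divide_distrib dist_commute)
  show ?thesis unfolding p00 p01 p10 using r1 r2 by simp
qed

end
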